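(* Let $d\in\{1,2\}$ and $\mathcal U$ a supercritical update family. There exist $u\in S^{d-1}$, a nonempty set $R\subset\mathbb Z^d$ of the form - if $d=1$: $R=[0,a_1u[\,\cap\,\mathbb Z$ with $a_1>0$ and $a_1u\in\mathbb Z$; - if $d=2$: $R=([0,a_1[\,u+[0,a_2]u^\perp)\cap\mathbb Z^2$ with $a_1>0$, $a_2\ge0$, $a_1u\in\mathbb Z^2$, where $u^\perp$ is a unit vector orthogonal to $u$, and a finite sequence of sites $x_1,\dots,x_p$ in $(a_1u+R)\cup(2a_1u+R)$ such that the following holds for the KCM with update family $\mathcal U$ (any parameter $q$): if at some time $s$ all sites of $R$ are at $0$, and there are times $s<s_1<\dots<s_p$ with $s_i\in\mathcal P^0_{x_i}$ for all $i$, and there is no 1-clock ring at any site of $R\cup\{x_1,\dots,x_p\}$ during $]s,s_p]$, then at time $s_p$ all sites of $a_1u+R$ are at $0$.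
   Context: Update family $\mathcal U$: finite collection of finite nonempty subsets of $\mathbb Z^d\setminus\{0\}$; $u\in S^{d-1}$ is stable if no $X\in\mathcal U$ lies in $\{x:\langle x,u\rangle<0\}$; supercritical means some open hemisphere of $S^{d-1}$ contains no stable direction (for $d=1$ this means some direction in $\{-1,1\}$ is unstable). KCM with parameter $q$ via Harris construction: independent Poisson processes $\mathcal P^0_x$ (rate $q$, 0-clock rings) and $\mathcal P^1_x$ (rate $1-q$, 1-clock rings) at each site; at a ring at $x$, if some $x+X$ ($X\in\mathcal U$) is all $0$ just before, $x$ is set to $0$ (for a 0-clock ring) or $1$ (for a 1-clock ring); otherwise no change. *)

theory Defs
  imports "HOL-Analysis.Analysis"
begin

definition rvec :: "int^'d \<Rightarrow> real^'d" where
  "rvec x = (\<chi> i. real_of_int (x $ i))"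

definition update_family :: "(int^'d) set set \<Rightarrow> bool" where
  "update_family U \<longleftrightarrow> finite U \<and>
     (\<forall>X\<in>U. finite X \<and> X \<noteq> {} \<and> 0 \<notin> X)"

definition stable_dir :: "(int^'d) set set \<Rightarrow> real^'d \<Rightarrow> bool" where
  "stable_dir U u \<longleftrightarrow> norm u = 1 \<and>
     \<not> (\<exists>X\<in>U. \<forall>x\<in>X. inner (rvec x) u < 0)"

definition supercritical :: "(int^'d) set set \<Rightarrow> bool" where
  "supercritical U \<longleftrightarrow>
     (\<exists>v::real^'d. norm v = 1 \<and> (\<forall>u. stable_dir U u \<longrightarrow> inner u v \<le> 0))"

text \<open>Realisation of the Harris clocks: P0 x = 0-clock ring times at x, P1 x = 1-clock
  ring times at x.  Almost sure properties: locally finite, 0- and 1-clocks never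
  ring simultaneously.\<close>
definition harris_clocks :: "(int^'d \<Rightarrow> real set) \<Rightarrow> (int^'d \<Rightarrow> real set) \<Rightarrow> bool" where
  "harris_clocks P0 P1 \<longleftrightarrow>
     (\<forall>x a b. finite {t\<in>P0 x. a \<le> t \<and> t \<le> b} \<and> finite {t\<in>P1 x. a \<le> t \<and> t \<le> b}) \<and>
     (\<forall>x. P0 x \<inter> P1 x = {})"

definition left_val :: "(real \<Rightarrow> int^'d \<Rightarrow> nat) \<Rightarrow> int^'d \<Rightarrow> real \<Rightarrow> nat \<Rightarrow> bool" where
  "left_val \<eta> x t v \<longleftrightarrow> (\<exists>\<epsilon>>0. \<forall>r. t - \<epsilon> < r \<and> r < t \<longrightarrow> \<eta> r x = v)"

definition constraint_before :: "(int^'d) set set \<Rightarrow> (real \<Rightarrow> int^'d \<Rightarrow> nat) \<Rightarrow> int^'d \<Rightarrow> real \<Rightarrow> bool" where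
  "constraint_before U \<eta> x t \<longleftrightarrow> (\<exists>X\<in>U. \<forall>y\<in>X. left_val \<eta> (x + y) t 0)"

definition kcm_traj :: "(int^'d) set set \<Rightarrow> (int^'d \<Rightarrow> real set) \<Rightarrow> (int^'d \<Rightarrow> real set)
    \<Rightarrow> (real \<Rightarrow> int^'d \<Rightarrow> nat) \<Rightarrow> bool" where
  "kcm_traj U P0 P1 \<eta> \<longleftrightarrow>
     (\<forall>t x. \<eta> t x \<in> {0, 1}) \<and>
     (\<forall>t x. \<exists>v. left_val \<eta> x t v) \<and>
     (\<forall>t x. \<exists>\<epsilon>>0. \<forall>r. t \<le> r \<and> r < t + \<epsilon> \<longrightarrow> \<eta> r x = \<eta> t x) \<and>
     (\<forall>t x v. left_val \<eta> x t v \<longrightarrow>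
        \<eta> t x = (if t \<in> P0 x \<and> constraint_before U \<eta> x t then 0
                  else if t \<in> P1 x \<and> constraint_before U \<eta> x t then 1
                  else v))"

end

theory Submission
  imports Defs
begin



lemma pers:
  assumes K: "kcm_traj U P0 P1 \<eta>" and z: "\<eta> t0 y = 0"
    and np: "\<forall>t\<in>P1 y. \<not> (t0 < t \<and> t \<le> T)"
    and tt: "t0 \<le> t" "t \<le> T"
  shows "\<eta> t y = 0"
proof (rule ccontr)
  assume ne: "\<eta> t y \<noteq> 0"
  define S where "S = {r. t0 \<le> r \<and> r \<le> t \<and> \<eta> r y \<noteq> 0}"
  have tS: "t \<in> S" using tt ne by (simp add: S_def)
  have bdd: "bdd_below S" by (auto simp: S_def bdd_below_def)
  define c where "c = Inf S"
  have cle: "c \<le> t" using tS bdd by (simp add: c_def cInf_lower)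
  have cge: "t0 \<le> c" using tS by (auto simp: c_def S_def intro!: cInf_greatest)
  have below: "\<eta> r y = 0" if "t0 \<le> r" "r < c" for r
  proof (rule ccontr)
    assume "\<eta> r y \<noteq> 0"
    then have "r \<in> S" using that cle by (simp add: S_def)
    then have "c \<le> r" using bdd by (simp add: c_def cInf_lower)
    then show False using that by simp
  qed
  have ec: "\<eta> c y = 0"
  proof (cases "c = t0")
    case True then show ?thesis using z by simp
  next
    case False
    then have lt: "t0 < c" using cge by simp
    have lv: "left_val \<eta> y c 0"
      unfolding left_val_def using lt below by (intro exI[of _ "c - t0"]) auto
    have "c \<notin> P1 y" using np lt cle tt by auto
    with K lv show ?thesis unfolding kcm_traj_def by auto
  qed
  from K obtain \<epsilon> where e: "\<epsilon> > 0" "\<forall>r. c \<le> r \<and> r < c + \<epsilon> \<longrightarrow> \<eta> r y = \<eta> c y"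
    unfolding kcm_traj_def by blast
  have "c + \<epsilon> \<le> Inf S"
  proof (rule cInf_greatest)
    show "S \<noteq> {}" using tS by auto
  next
    fix r assume "r \<in> S"
    then have "c \<le> r" "\<eta> r y \<noteq> 0" using bdd by (auto simp: c_def S_def cInf_lower)
    then show "c + \<epsilon> \<le> r" using e(2)[rule_format, of r] ec by linarith
  qed
  then show False using e by (simp add: c_def)
qed

lemma dyn:
  assumes K: "kcm_traj U P0 P1 \<eta>"
    and len: "length ss = length xs" and s: "s < hd ss" and so: "sorted_wrt (<) ss"
    and p0: "\<forall>i < length xs. ss ! i \<in> P0 (xs ! i)"
    and np: "\<forall>y \<in> R \<union> set xs. \<forall>t \<in> P1 y. \<not> (s < t \<and> t \<le> last ss)"
    and zR: "\<forall>y \<in> R. \<eta> s y = 0"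
    and ord: "\<forall>i < length xs. \<exists>X\<in>U. \<forall>y\<in>X. xs!i + y \<in> R \<or> (\<exists>j<i. xs!j = xs!i + y)"
  shows "\<forall>i < length xs. \<forall>t. ss!i \<le> t \<and> t \<le> last ss \<longrightarrow> \<eta> t (xs!i) = 0"
proof -
  have ltij: "ss!j < ss!i" if "j < i" "i < length ss" for i j
    using so that by (simp add: sorted_wrt_iff_nth_less)
  have hdle: "s < ss!i" if "i < length ss" for i
  proof -
    have "ss \<noteq> []" using that by auto
    then have "hd ss = ss!0" by (simp add: hd_conv_nth)
    then show ?thesis using s ltij[of 0 i] that by (cases i) auto
  qed
  have lastge: "ss!i \<le> last ss" if "i < length ss" for i
  proof -
    have "ss \<noteq> []" using that by auto
    then have "last ss = ss!(length ss - 1)" by (simp add: last_conv_nth)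
    then show ?thesis using ltij[of i "length ss - 1"] that by (cases "i = length ss - 1") force+
  qed
  have Rz: "\<eta> t y = 0" if "y \<in> R" "s \<le> t" "t \<le> last ss" for y t
    using pers[OF K zR[rule_format, OF that(1)] _ that(2,3)] np that(1) by blast
  show ?thesis
  proof (rule allI, rule impI)
    fix i assume "i < length xs"
    then show "\<forall>t. ss!i \<le> t \<and> t \<le> last ss \<longrightarrow> \<eta> t (xs!i) = 0"
    proof (induction i rule: less_induct)
      case (less i)
      obtain X where X: "X \<in> U" "\<forall>y\<in>X. xs!i + y \<in> R \<or> (\<exists>j<i. xs!j = xs!i + y)"
        using ord less.prems by blast
      have cb: "constraint_before U \<eta> (xs!i) (ss!i)"
        unfolding constraint_before_def
      proof (intro bexI[OF _ X(1)] ballI)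
        fix y assume y: "y \<in> X"
        show "left_val \<eta> (xs ! i + y) (ss ! i) 0"
        proof (cases "xs!i + y \<in> R")
          case True
          show ?thesis unfolding left_val_def
            using hdle[of i] less.prems len lastge[of i]
            by (intro exI[of _ "ss!i - s"]) (auto intro!: Rz[OF True])
        next
          case False
          then obtain j where j: "j < i" "xs!j = xs!i + y" using X y by blast
          have IH: "\<forall>t. ss!j \<le> t \<and> t \<le> last ss \<longrightarrow> \<eta> t (xs!j) = 0"
            using less.IH[OF j(1)] j less.prems by simp
          show ?thesis unfolding left_val_def
            using ltij[of j i] j less.prems len lastge[of i] IH
            by (intro exI[of _ "ss!i - ss!j"]) auto
        qed
      qed
      obtain v where "left_val \<eta> (xs!i) (ss!i) v" using K unfolding kcm_traj_def by blast
      then have e0: "\<eta> (ss!i) (xs!i) = 0"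
        using K cb p0 less.prems unfolding kcm_traj_def by auto
      show ?case
      proof (intro allI impI)
        fix t assume "ss!i \<le> t \<and> t \<le> last ss"
        moreover have "\<forall>t\<in>P1 (xs!i). \<not> (ss!i < t \<and> t \<le> last ss)"
          using np less.prems hdle[of i] len nth_mem[of i xs] by fastforce
        ultimately show "\<eta> t (xs!i) = 0" using pers[OF K e0] by blast
      qed
    qed
  qed
qed



lemma assemble:
  fixes \<psi> :: "int^'d \<Rightarrow> real"
  assumes fin: "finite P" and sub1: "(\<lambda>x. z + x) ` R \<subseteq> P"
    and sub2: "P \<subseteq> ((\<lambda>x. z + x) ` R) \<union> ((\<lambda>x. z + z + x) ` R)"
    and Rne: "R \<noteq> {}"
    and core: "\<forall>x\<in>P. \<exists>X\<in>U. \<forall>y\<in>X. x + y \<in> R \<or> (x + y \<in> P \<and> \<psi> (x + y) < \<psi> x)"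
  shows "\<exists>xs. xs \<noteq> [] \<and>
     set xs \<subseteq> ((\<lambda>x. z + x) ` R) \<union> ((\<lambda>x. z + z + x) ` R) \<and>
     (\<forall>P0 P1 \<eta> (s::real) (ss::real list).
        harris_clocks P0 P1 \<longrightarrow> kcm_traj U P0 P1 \<eta> \<longrightarrow>
        length ss = length xs \<longrightarrow> s < hd ss \<longrightarrow> sorted_wrt (<) ss \<longrightarrow>
        (\<forall>i < length xs. ss ! i \<in> P0 (xs ! i)) \<longrightarrow>
        (\<forall>y \<in> R \<union> set xs. \<forall>t \<in> P1 y. \<not> (s < t \<and> t \<le> last ss)) \<longrightarrow>
        (\<forall>y \<in> R. \<eta> s y = 0) \<longrightarrow>
        (\<forall>y \<in> (\<lambda>x. z + x) ` R. \<eta> (last ss) y = 0))"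
proof -
  obtain xs0 where xs0: "set xs0 = P" using finite_list[OF fin] by blast
  define xs where "xs = sort_key \<psi> xs0"
  have sx: "set xs = P" using xs0 by (simp add: xs_def)
  have so: "sorted (map \<psi> xs)" by (simp add: xs_def)
  have ne: "xs \<noteq> []" using sx sub1 Rne by auto
  have ord: "\<forall>i < length xs. \<exists>X\<in>U. \<forall>y\<in>X. xs!i + y \<in> R \<or> (\<exists>j<i. xs!j = xs!i + y)"
  proof (intro allI impI)
    fix i assume i: "i < length xs"
    then have "xs!i \<in> P" using sx nth_mem by blast
    then obtain X where X: "X \<in> U" "\<forall>y\<in>X. xs!i + y \<in> R \<or> (xs!i + y \<in> P \<and> \<psi> (xs!i + y) < \<psi> (xs!i))"
      using core by blast
    show "\<exists>X\<in>U. \<forall>y\<in>X. xs!i + y \<in> R \<or> (\<exists>j<i. xs!j = xs!i + y)"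
    proof (intro bexI[OF _ X(1)] ballI)
      fix y assume y: "y \<in> X"
      show "xs!i + y \<in> R \<or> (\<exists>j<i. xs!j = xs!i + y)"
      proof (cases "xs!i + y \<in> R")
        case False
        then have "xs!i + y \<in> set xs" "\<psi> (xs!i + y) < \<psi> (xs!i)" using X y sx by auto
        then obtain j where j: "j < length xs" "xs!j = xs!i + y" "\<psi> (xs!j) < \<psi> (xs!i)"
          by (metis in_set_conv_nth)
        have "j < i"
        proof (rule ccontr)
          assume "\<not> j < i"
          then have "\<psi> (xs!i) \<le> \<psi> (xs!j)"
            using sorted_nth_mono[OF so, of i j] j i by simp
          then show False using j by simp
        qed
        then show ?thesis using j by blast
      qed simp
    qed
  qed
  show ?thesis
  proof (intro exI[of _ xs] conjI allI impI ballI)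
    show "xs \<noteq> []" by (rule ne)
    show "set xs \<subseteq> ((\<lambda>x. z + x) ` R) \<union> ((\<lambda>x. z + z + x) ` R)" using sx sub2 by simp
  next
    fix P0 P1 \<eta> s ss y
    assume K: "kcm_traj U P0 P1 \<eta>" and len: "length ss = length xs" and s: "s < hd ss"
      and sw: "sorted_wrt (<) ss" and p0: "\<forall>i < length xs. ss ! i \<in> P0 (xs ! i)"
      and np: "\<forall>y \<in> R \<union> set xs. \<forall>t \<in> P1 y. \<not> (s < t \<and> t \<le> last ss)"
      and zR: "\<forall>y \<in> R. \<eta> s y = 0" and y: "y \<in> (\<lambda>x. z + x) ` R"
    have D: "\<forall>i < length xs. \<forall>t. ss!i \<le> t \<and> t \<le> last ss \<longrightarrow> \<eta> t (xs!i) = 0"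
      by (rule dyn[OF K len s sw p0 np zR ord])
    have "y \<in> set xs" using y sub1 sx by auto
    then obtain i where i: "i < length xs" "xs!i = y" by (metis in_set_conv_nth)
    have "ss!i \<le> last ss"
    proof -
      have "ss \<noteq> []" using i len by auto
      then have "last ss = ss!(length ss - 1)" by (simp add: last_conv_nth)
      moreover have "i \<le> length ss - 1" using i len by simp
      moreover have "i < length ss - 1 \<Longrightarrow> ss!i < ss!(length ss - 1)"
        using sw i len by (simp add: sorted_wrt_iff_nth_less)
      ultimately show ?thesis by (cases "i = length ss - 1") auto
    qed
    then show "\<eta> (last ss) y = 0" using D i by auto
  qed
qed

lemma finite_box:
  fixes M :: real
  shows "finite {x :: int^'d. \<forall>k. \<bar>x$k\<bar> \<le> M}"
proof -
  define m where "m = \<lceil>M\<rceil>"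
  have "{x :: int^'d. \<forall>k. \<bar>x$k\<bar> \<le> M} \<subseteq> vec_lambda ` (PiE UNIV (\<lambda>_. {-m..m}))"
  proof
    fix x :: "int^'d" assume x: "x \<in> {x. \<forall>k. \<bar>x$k\<bar> \<le> M}"
    have "\<bar>x$k\<bar> \<le> m" for k
    proof -
      have "real_of_int \<bar>x$k\<bar> \<le> M" using x by simp
      also have "M \<le> real_of_int m" unfolding m_def by (rule le_of_int_ceiling)
      finally show ?thesis by (simp only: of_int_le_iff)
    qed
    then have "vec_nth x \<in> PiE UNIV (\<lambda>_. {-m..m})" by (auto simp: abs_le_iff) (metis neg_le_iff_le minus_minus)
    then show "x \<in> vec_lambda ` (PiE UNIV (\<lambda>_. {-m..m}))"
      by (rule rev_image_eqI) simp
  qed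
  moreover have "finite (vec_lambda ` (PiE (UNIV::'d set) (\<lambda>_. {-m..m})))"
    by (intro finite_imageI finite_PiE) auto
  ultimately show ?thesis by (rule finite_subset)
qed




lemma end_rule:
  fixes A B :: "'a \<Rightarrow> real"
  assumes fin: "finite U" and finX: "\<forall>X\<in>U. finite X \<and> X \<noteq> {}"
    and Q: "\<forall>s. \<exists>X\<in>U. \<forall>y\<in>X. A y + s * B y < 0"
  shows "\<exists>X\<in>U. (\<forall>y\<in>X. B y \<ge> 0 \<and> (B y = 0 \<longrightarrow> A y < 0)) \<and>
           (\<exists>s0 \<delta>. \<delta> > 0 \<and> (\<forall>s\<le>s0. \<forall>y\<in>X. A y + s * B y \<le> -\<delta>))"
proof -
  define S where "S X = {n::nat. \<forall>y\<in>X. A y - real n * B y < 0}" for X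
  have UN: "(UNIV::nat set) \<subseteq> (\<Union>X\<in>U. S X)"
  proof
    fix n :: nat
    obtain X where X: "X \<in> U" "\<forall>y\<in>X. A y + (- real n) * B y < 0" using Q by blast
    then have "n \<in> S X" unfolding S_def by simp
    then show "n \<in> (\<Union>X\<in>U. S X)" using X(1) by blast
  qed
  then obtain X where X: "X \<in> U" "infinite (S X)"
  proof -
    have "\<not> (\<forall>X\<in>U. finite (S X))"
    proof
      assume "\<forall>X\<in>U. finite (S X)"
      then have "finite (\<Union>X\<in>U. S X)" using fin by blast
      then show False using UN infinite_UNIV_nat finite_subset by blast
    qed
    then show ?thesis using that by blast
  qed
  then have unb: "\<forall>m. \<exists>n\<ge>m. n \<in> S X" by (simp add: infinite_nat_iff_unbounded_le)
  have Bge: "B y \<ge> 0" if y: "y \<in> X" for y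
  proof (rule ccontr)
    assume "\<not> B y \<ge> 0"
    then have Bn: "B y < 0" by simp
    obtain n where n: "n \<ge> nat \<lceil>\<bar>A y\<bar> / (- B y)\<rceil>" "n \<in> S X" using unb by blast
    have "\<bar>A y\<bar> / (- B y) \<le> real n" using n(1) by linarith
    moreover have "0 < - B y" using Bn by simp
    ultimately have "\<bar>A y\<bar> \<le> real n * (- B y)" using pos_divide_le_eq by blast
    then have "A y - real n * B y \<ge> 0" by linarith
    then show False using n(2) y by (auto simp: S_def)
  qed
  obtain n0 where n0: "n0 \<in> S X" using unb by blast
  have A0: "B y = 0 \<longrightarrow> A y < 0" if "y \<in> X" for y
    using n0 that by (auto simp: S_def)
  define \<delta> where "\<delta> = Min ((\<lambda>y. -(A y - real n0 * B y)) ` X)"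
  have fX: "finite X" "X \<noteq> {}" using finX X by auto
  have dpos: "\<delta> > 0" unfolding \<delta>_def using fX n0 by (auto simp: S_def)
  have "\<forall>s\<le>- real n0. \<forall>y\<in>X. A y + s * B y \<le> -\<delta>"
  proof (intro allI impI ballI)
    fix s y assume s: "s \<le> - real n0" and y: "y \<in> X"
    have "\<delta> \<le> -(A y - real n0 * B y)" unfolding \<delta>_def using fX y by (intro Min_le) auto
    moreover have "s * B y \<le> (- real n0) * B y" using s Bge[OF y] by (rule mult_right_mono)
    ultimately show "A y + s * B y \<le> -\<delta>" by simp
  qed
  then show ?thesis using X(1) Bge A0 dpos by (intro bexI[OF _ X(1)] conjI exI) auto
qed

lemma mid_rule:
  fixes A B :: "'a \<Rightarrow> real"
  assumes fin: "finite U" and finX: "\<forall>X\<in>U. finite X \<and> X \<noteq> {}"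
    and Q: "\<forall>s. \<exists>X\<in>U. \<forall>y\<in>X. A y + s * B y < 0"
  shows "\<exists>\<delta>>0. \<forall>s\<in>{lo..hi}. \<exists>X\<in>U. \<forall>y\<in>X. A y + s * B y \<le> -\<delta>"
proof -
  define f where "f c = {s. \<forall>y\<in>fst c. A y + s * B y < - 1 / (real (snd c) + 1)}" for c :: "'a set \<times> nat"
  have opn: "open (f c)" if "c \<in> U \<times> UNIV" for c
  proof -
    have "f c = (\<Inter>y\<in>fst c. {s. A y + s * B y < - 1 / (real (snd c) + 1)})"
      by (auto simp: f_def)
    moreover have "open {s. A y + s * B y < - 1 / (real (snd c) + 1)}" for y
      by (intro open_Collect_less continuous_intros)
    ultimately show ?thesis using that finX by (auto intro!: open_INT)
  qed
  have cov: "{lo..hi} \<subseteq> (\<Union>c\<in>U \<times> UNIV. f c)"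
  proof
    fix s assume "s \<in> {lo..hi}"
    obtain X where X: "X \<in> U" "\<forall>y\<in>X. A y + s * B y < 0" using Q by blast
    have fX: "finite X" "X \<noteq> {}" using finX X by auto
    define m where "m = Max ((\<lambda>y. A y + s * B y) ` X)"
    have mneg: "m < 0" unfolding m_def using fX X by auto
    obtain n :: nat where n: "inverse (real (Suc n)) < - m" using reals_Archimedean[of "-m"] mneg by auto
    have "\<forall>y\<in>X. A y + s * B y < - 1 / (real n + 1)"
    proof
      fix y assume y: "y \<in> X"
      have "A y + s * B y \<le> m" unfolding m_def using fX y by (intro Max_ge) auto
      moreover have "1 / (real n + 1) = inverse (real (Suc n))" by (simp add: field_simps)
      ultimately show "A y + s * B y < - 1 / (real n + 1)" using n by linarith
    qed
    then have "s \<in> f (X, n)" by (simp add: f_def)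
    then show "s \<in> (\<Union>c\<in>U \<times> UNIV. f c)" using X by blast
  qed
  obtain C' where C': "C' \<subseteq> U \<times> UNIV" "finite C'" "{lo..hi} \<subseteq> (\<Union>c\<in>C'. f c)"
    using compactE_image[OF compact_Icc opn cov] by blast
  define N where "N = (\<Sum>c\<in>C'. snd c)"
  have "\<forall>s\<in>{lo..hi}. \<exists>X\<in>U. \<forall>y\<in>X. A y + s * B y \<le> - (1 / (real N + 1))"
  proof
    fix s assume "s \<in> {lo..hi}"
    then obtain c where c: "c \<in> C'" "s \<in> f c" using C' by blast
    have "snd c \<le> N" unfolding N_def using C'(2) c(1) by (intro member_le_sum) auto
    then have le: "1 / (real (snd c) + 1) \<ge> 1 / (real N + 1)" by (simp add: frac_le)
    have "fst c \<in> U" using C' c by auto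
    moreover have "\<forall>y\<in>fst c. A y + s * B y \<le> - (1 / (real N + 1))"
      using c(2) le unfolding f_def by fastforce
    ultimately show "\<exists>X\<in>U. \<forall>y\<in>X. A y + s * B y \<le> - (1 / (real N + 1))" by blast
  qed
  then show ?thesis by (intro exI[of _ "1 / (real N + 1)"]) auto
qed




lemma rvec_add: "rvec (x + y) = rvec x + rvec y" by (simp add: rvec_def vec_eq_iff)
lemma rvec_minus: "rvec (- x) = - rvec x" by (simp add: rvec_def vec_eq_iff)
lemma rvec_diff: "rvec (x - y) = rvec x - rvec y" by (simp add: rvec_def vec_eq_iff)
lemma rvec_zero: "rvec 0 = 0" by (simp add: rvec_def vec_eq_iff)
lemma rvec_smult: "rvec (c *s x) = real_of_int c *\<^sub>R rvec x" by (simp add: rvec_def vec_eq_iff)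
lemma rvec_nth: "rvec x $ k = real_of_int (x $ k)" by (simp add: rvec_def)

locale two =
  fixes i j :: "'d::finite"
  assumes ij: "i \<noteq> j" and univ: "(UNIV::'d set) = {i, j}"
begin

definition rot :: "real^'d \<Rightarrow> real^'d" where
  "rot x = (\<chi> k. if k = i then - x$j else x$i)"

lemma kcases: "k = i \<or> k = j" using univ by auto

lemma rot_i[simp]: "rot x $ i = - x$j" by (simp add: rot_def)
lemma rot_j[simp]: "rot x $ j = x$i" using ij by (simp add: rot_def)

lemma vec2_eq: "(x::real^'d) = y \<longleftrightarrow> x$i = y$i \<and> x$j = y$j"
proof
  assume h: "x$i = y$i \<and> x$j = y$j"
  show "x = y" unfolding vec_eq_iff
  proof
    fix k show "x$k = y$k" using kcases[of k] h by auto
  qed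
qed simp

lemma inner2: "(x::real^'d) \<bullet> y = x$i * y$i + x$j * y$j"
  using ij by (simp add: inner_vec_def univ)

lemma rot_add: "rot (x + y) = rot x + rot y" by (simp add: vec2_eq)
lemma rot_scaleR: "rot (c *\<^sub>R x) = c *\<^sub>R rot x" by (simp add: vec2_eq)
lemma rot_diff: "rot (x - y) = rot x - rot y" by (simp add: vec2_eq)
lemma rot_rot: "rot (rot x) = - x" by (simp add: vec2_eq)
lemma inner_rot_self: "x \<bullet> rot x = 0" by (simp add: inner2 algebra_simps)
lemma inner_rot_rot: "rot x \<bullet> rot y = x \<bullet> y" by (simp add: inner2 algebra_simps)
lemma norm_rot: "norm (rot x) = norm x"
  by (simp add: norm_eq_sqrt_inner inner_rot_rot)

lemma norm1: "norm (u::real^'d) = 1 \<Longrightarrow> u$i * u$i + u$j * u$j = 1"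
  using norm_eq_1[of u] inner2[of u u] by simp

lemma decomp: fixes u x :: "real^'d" assumes "norm u = 1"
  shows "x = (x \<bullet> u) *\<^sub>R u + (x \<bullet> rot u) *\<^sub>R rot u"
proof -
  have n: "u$i * u$i + u$j * u$j = 1" using norm1[OF assms] .
  have "(x$i * u$i + x$j * u$j) * u$i + (x$i * (- u$j) + x$j * u$i) * (- u$j) = x$i * (u$i * u$i + u$j * u$j)"
    by (simp add: algebra_simps)
  then have 1: "x$i = (x$i * u$i + x$j * u$j) * u$i + (x$i * (- u$j) + x$j * u$i) * (- u$j)"
    using n by simp
  have "(x$i * u$i + x$j * u$j) * u$j + (x$i * (- u$j) + x$j * u$i) * u$i = x$j * (u$i * u$i + u$j * u$j)"
    by (simp add: algebra_simps)
  then have 2: "x$j = (x$i * u$i + x$j * u$j) * u$j + (x$i * (- u$j) + x$j * u$i) * u$i"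
    using n by simp
  from 1 2 show ?thesis by (simp add: vec2_eq inner2)
qed

end



context two begin

lemma density:
  fixes v :: "real^'d"
  assumes nv: "norm v = 1" and t1: "t1 > 0"
  shows "\<exists>t p lam. 0 < t \<and> t \<le> t1 \<and> lam > 0 \<and> rvec p = lam *\<^sub>R (v + t *\<^sub>R rot v)"
proof -
  define c0 where "c0 = v + (t1/2) *\<^sub>R rot v"
  define N :: nat where "N = nat \<lceil>2*(1+t1)/t1 + 2/t1\<rceil> + 2"
  have N1: "real N \<ge> 2*(1+t1)/t1 + 2/t1 + 2" unfolding N_def by linarith
  define p :: "int^'d" where "p = (\<chi> k. round (real N * c0$k))"
  define e where "e = rvec p - real N *\<^sub>R c0"
  have ek: "\<bar>e$k\<bar> \<le> 1/2" for k
    using of_int_round_abs_le[of "real N * c0$k"] by (simp add: e_def p_def rvec_def)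
  have vb: "\<bar>w$k\<bar> \<le> 1" if "norm w = 1" for w :: "real^'d" and k
    using component_le_norm_cart[of w k] that by simp
  have ebound: "\<bar>e \<bullet> w\<bar> \<le> 1" if "norm w = 1" for w
  proof -
    have "\<bar>e$i * w$i\<bar> \<le> 1/2 * 1" unfolding abs_mult by (intro mult_mono ek vb that) auto
    moreover have "\<bar>e$j * w$j\<bar> \<le> 1/2 * 1" unfolding abs_mult by (intro mult_mono ek vb that) auto
    ultimately show ?thesis unfolding inner2 by linarith
  qed
  have ev: "\<bar>e \<bullet> v\<bar> \<le> 1" using ebound nv by blast
  have er: "\<bar>e \<bullet> rot v\<bar> \<le> 1" using ebound nv norm_rot by metis
  have de: "e = (e \<bullet> v) *\<^sub>R v + (e \<bullet> rot v) *\<^sub>R rot v" by (rule decomp[OF nv])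
  define \<alpha> where "\<alpha> = real N + e \<bullet> v"
  define \<beta> where "\<beta> = real N * t1 / 2 + e \<bullet> rot v"
  have rp: "rvec p = \<alpha> *\<^sub>R v + \<beta> *\<^sub>R rot v"
  proof -
    have "rvec p = real N *\<^sub>R c0 + e" by (simp add: e_def)
    also have "\<dots> = \<alpha> *\<^sub>R v + \<beta> *\<^sub>R rot v"
      by (subst de) (simp add: c0_def \<alpha>_def \<beta>_def algebra_simps)
    finally show ?thesis .
  qed
  have Ngt: "real N * t1 \<ge> 2*(1+t1) + 2" 
  proof -
    have "real N * t1 \<ge> (2*(1+t1)/t1 + 2/t1 + 2) * t1" using mult_right_mono[OF N1, of t1] t1 by simp
    also have "(2*(1+t1)/t1 + 2/t1 + 2) * t1 = 2*(1+t1) + 2 + 2 * t1" using t1 by (simp add: field_simps)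
    finally show ?thesis using t1 by linarith
  qed
  have N2: "real N \<ge> 2" by (simp add: N_def)
  have apos: "\<alpha> > 0" unfolding \<alpha>_def using ev N2 by (simp add: abs_le_iff)
  have bpos: "\<beta> > 0" unfolding \<beta>_def using er Ngt t1 by (simp add: abs_le_iff)
  have "- 1 \<le> e \<bullet> v" using ev by (simp add: abs_le_iff)
  then have tev: "t1 * (e \<bullet> v) \<ge> t1 * (-1)" using t1 by (intro mult_left_mono) auto
  have ta: "t1 * \<alpha> = real N * t1 + t1 * (e \<bullet> v)" by (simp add: \<alpha>_def distrib_left mult.commute)
  have ble: "\<beta> \<le> t1 * \<alpha>" unfolding ta \<beta>_def using er tev Ngt by (simp add: abs_le_iff)
  define t where "t = \<beta> / \<alpha>"
  have "t \<le> t1" unfolding t_def using apos ble by (simp add: divide_le_eq mult.commute)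
  moreover have "t > 0" unfolding t_def using apos bpos by simp
  moreover have "rvec p = \<alpha> *\<^sub>R (v + t *\<^sub>R rot v)" unfolding rp t_def using apos
    by (simp add: algebra_simps)
  ultimately show ?thesis using apos by blast
qed

end



context two begin

lemma rational_dir:
  fixes U :: "(int^'d) set set" and v :: "real^'d"
  assumes fin: "finite U" and finX: "\<forall>X\<in>U. finite X \<and> X \<noteq> {}"
    and nv: "norm v = 1"
    and Qv: "\<forall>s. \<exists>X\<in>U. \<forall>y\<in>X. rvec y \<bullet> v + s * (rvec y \<bullet> rot v) < 0"
  shows "\<exists>u p lam. norm u = 1 \<and> lam > 0 \<and> rvec p = lam *\<^sub>R u \<and>
           (\<forall>s. \<exists>X\<in>U. \<forall>y\<in>X. rvec y \<bullet> u + s * (rvec y \<bullet> rot u) < 0)"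
proof -
  define Av where "Av y = rvec y \<bullet> v" for y
  define Bv where "Bv y = rvec y \<bullet> rot v" for y
  have Q': "\<forall>s. \<exists>X\<in>U. \<forall>y\<in>X. Av y + s * (- Bv y) < 0"
  proof
    fix s
    obtain X where "X \<in> U" "\<forall>y\<in>X. rvec y \<bullet> v + (-s) * (rvec y \<bullet> rot v) < 0" using Qv by blast
    then show "\<exists>X\<in>U. \<forall>y\<in>X. Av y + s * (- Bv y) < 0" by (auto simp: Av_def Bv_def)
  qed
  obtain Xp where Xp: "Xp \<in> U" "\<forall>y\<in>Xp. - Bv y \<ge> 0 \<and> (- Bv y = 0 \<longrightarrow> Av y < 0)"
    using end_rule[OF fin finX Q'] by blast
  show ?thesis
  proof (cases "\<exists>y\<in>Xp. Bv y = 0")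
    case True
    then obtain y where y: "y \<in> Xp" "Bv y = 0" by blast
    then have Ay: "Av y < 0" using Xp by auto
    have "rvec y = Av y *\<^sub>R v + Bv y *\<^sub>R rot v" unfolding Av_def Bv_def by (rule decomp[OF nv])
    then have "rvec (- y) = (- Av y) *\<^sub>R v" using y by (simp add: rvec_minus)
    then show ?thesis using nv Ay Qv by (intro exI[of _ v] exI[of _ "-y"] exI[of _ "- Av y"]) auto
  next
    case False
    then have Bn: "\<forall>y\<in>Xp. Bv y < 0" using Xp by force
    have fXp: "finite Xp" using finX Xp by auto
    define R0 where "R0 = 1 + (\<Sum>y\<in>Xp. \<bar>Av y\<bar> / (- Bv y))"
    have R0ge: "R0 \<ge> 1" unfolding R0_def using Bn by (auto intro!: sum_nonneg divide_nonneg_neg)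
    have big: "- Av y + r * Bv y < 0" if y: "y \<in> Xp" and r: "r \<ge> R0" for y r
    proof -
      have b: "- Bv y > 0" using Bn y by auto
      have "\<bar>Av y\<bar> / (- Bv y) \<le> (\<Sum>y\<in>Xp. \<bar>Av y\<bar> / (- Bv y))"
        using fXp y Bn by (intro member_le_sum) (auto intro!: divide_nonneg_neg)
      then have "\<bar>Av y\<bar> / (- Bv y) < r" using r unfolding R0_def by linarith
      then have "\<bar>Av y\<bar> < r * (- Bv y)" using b pos_divide_less_eq by blast
      then show ?thesis by linarith
    qed
    define t1 where "t1 = 1 / R0"
    have t1: "t1 > 0" using R0ge by (simp add: t1_def)
    obtain t p lam where tp: "0 < t" "t \<le> t1" "lam > 0" "rvec p = lam *\<^sub>R (v + t *\<^sub>R rot v)"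
      using density[OF nv t1] by blast
    define u' where "u' = v + t *\<^sub>R rot v"
    have vv: "v \<bullet> v = 1" using nv by (simp add: norm_eq_1)
    have uu: "u' \<bullet> u' = 1 + t * t" unfolding u'_def
      by (simp add: inner_add_left inner_add_right inner_rot_self inner_rot_rot vv inner_commute[of "rot v" v])
    define nu where "nu = norm u'"
    have nupos: "nu > 0" unfolding nu_def norm_eq_sqrt_inner uu
      by (simp add: add_pos_nonneg)
    define u where "u = (1/nu) *\<^sub>R u'"
    have nu1: "norm u = 1" unfolding u_def nu_def using nupos[unfolded nu_def] by simp
    have rotu: "rot u = (1/nu) *\<^sub>R (rot v - t *\<^sub>R v)"
      unfolding u_def u'_def by (simp add: rot_scaleR rot_add rot_rot)
    have rp: "rvec p = (lam * nu) *\<^sub>R u" unfolding u_def tp(4) u'_def using nupos by simp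
    have tR: "1 / t \<ge> R0"
    proof -
      have "t \<le> 1 / R0" using tp(2) by (simp add: t1_def)
      then have "t * R0 \<le> 1" using R0ge by (simp add: le_divide_eq)
      then show ?thesis using tp(1) by (simp add: le_divide_eq mult.commute)
    qed
    have Qu: "\<forall>s. \<exists>X\<in>U. \<forall>y\<in>X. rvec y \<bullet> u + s * (rvec y \<bullet> rot u) < 0"
    proof
      fix s
      have key: "rvec y \<bullet> u + s * (rvec y \<bullet> rot u) = (1/nu) * ((1 - s*t) * Av y + (t + s) * Bv y)" for y
        unfolding rotu unfolding u_def u'_def Av_def Bv_def
        by (simp add: inner_add_right inner_diff_right algebra_simps)
      have "\<exists>X\<in>U. \<forall>y\<in>X. (1 - s*t) * Av y + (t + s) * Bv y < 0"
      proof (cases "1 - s*t > 0")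
        case True
        obtain X where X: "X \<in> U" "\<forall>y\<in>X. Av y + ((t+s)/(1-s*t)) * Bv y < 0"
          using Qv unfolding Av_def Bv_def by blast
        have "\<forall>y\<in>X. (1 - s*t) * Av y + (t + s) * Bv y < 0"
        proof
          fix y assume "y \<in> X"
          then have "(1 - s*t) * (Av y + ((t+s)/(1-s*t)) * Bv y) < 0"
            using X True by (simp add: mult_pos_neg)
          then show "(1 - s*t) * Av y + (t + s) * Bv y < 0" using True
            by (simp add: distrib_left)
        qed
        then show ?thesis using X by blast
      next
        case False
        then have st: "s * t \<ge> 1" by simp
        then have spos: "s > 0" using tp(1) by (metis mult_nonpos_nonneg not_le less_le zero_less_one order.trans less_imp_le not_one_le_zero)
        have "\<forall>y\<in>Xp. (1 - s*t) * Av y + (t + s) * Bv y < 0"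
        proof
          fix y assume y: "y \<in> Xp"
          show "(1 - s*t) * Av y + (t + s) * Bv y < 0"
          proof (cases "s * t = 1")
            case True
            then show ?thesis using Bn y tp(1) spos by (simp add: mult_pos_neg)
          next
            case False
            then have st1: "s * t - 1 > 0" using st by simp
            define r where "r = (t + s) / (s * t - 1)"
            have "r \<ge> 1 / t"
            proof -
              have "t * (t + s) \<ge> s * t - 1" by (simp add: algebra_simps)
              then have "(t + s) / (s * t - 1) \<ge> 1 / t" using st1 tp(1)
                by (simp add: field_simps)
              then show ?thesis by (simp add: r_def)
            qed
            then have "- Av y + r * Bv y < 0" using big[OF y] tR by simp
            then have "(s * t - 1) * (- Av y + r * Bv y) < 0" using st1 by (simp add: mult_pos_neg)
            moreover have "(s * t - 1) * r = t + s" unfolding r_def using st1 by simp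
            moreover have "(s*t-1)*(-Av y + r*Bv y) = (1 - s*t)*Av y + ((s*t-1)*r)*Bv y"
              by (simp add: algebra_simps)
            ultimately show ?thesis by simp
          qed
        qed
        then show ?thesis using Xp(1) by blast
      qed
      then obtain X where X: "X \<in> U" "\<forall>y\<in>X. (1 - s*t) * Av y + (t + s) * Bv y < 0" by blast
      have "\<forall>y\<in>X. rvec y \<bullet> u + s * (rvec y \<bullet> rot u) < 0"
        using X nupos by (simp add: key divide_neg_pos)
      then show "\<exists>X\<in>U. \<forall>y\<in>X. rvec y \<bullet> u + s * (rvec y \<bullet> rot u) < 0" using X by blast
    qed
    show ?thesis using nu1 rp tp(3) nupos Qu by (intro exI[of _ u] exI[of _ p] exI[of _ "lam * nu"]) auto
  qed
qed

end



context two begin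

lemma construct2:
  fixes U :: "(int^'d) set set" and u :: "real^'d" and p :: "int^'d"
  assumes fin: "finite U" and finX: "\<forall>X\<in>U. finite X \<and> X \<noteq> {}"
    and nu: "norm u = 1" and lam: "lam > 0" and rp: "rvec p = lam *\<^sub>R u"
    and Qu: "\<forall>s. \<exists>X\<in>U. \<forall>y\<in>X. rvec y \<bullet> u + s * (rvec y \<bullet> rot u) < 0"
  shows "\<exists>R a1 z P (\<psi>::int^'d \<Rightarrow> real). a1 > 0 \<and> rvec z = a1 *\<^sub>R u \<and> R \<noteq> {} \<and>
     (\<exists>(a2::real) (w::real^'d). a2 \<ge> 0 \<and> norm w = 1 \<and> inner u w = 0 \<and>
              R = {x. \<exists>t r. 0 \<le> t \<and> t < a1 \<and> 0 \<le> r \<and> r \<le> a2 \<and>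
                          rvec x = t *\<^sub>R u + r *\<^sub>R w}) \<and>
     finite P \<and> (\<lambda>x. z + x) ` R \<subseteq> P \<and> P \<subseteq> ((\<lambda>x. z + x) ` R) \<union> ((\<lambda>x. z + z + x) ` R) \<and>
     (\<forall>x\<in>P. \<exists>X\<in>U. \<forall>y\<in>X. x + y \<in> R \<or> (x + y \<in> P \<and> \<psi> (x + y) < \<psi> x))"
proof -
  define A where "A x = rvec x \<bullet> u" for x :: "int^'d"
  define B where "B x = rvec x \<bullet> rot u" for x :: "int^'d"
  have Aadd: "A (x + y) = A x + A y" for x y by (simp add: A_def rvec_add inner_add_left)
  have Badd: "B (x + y) = B x + B y" for x y by (simp add: B_def rvec_add inner_add_left)
  have Adiff: "A (x - y) = A x - A y" for x y by (simp add: A_def rvec_diff inner_diff_left)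
  have Bdiff: "B (x - y) = B x - B y" for x y by (simp add: B_def rvec_diff inner_diff_left)
  have uu: "u \<bullet> u = 1" using nu by (simp add: norm_eq_1)
  have Q: "\<forall>s. \<exists>X\<in>U. \<forall>y\<in>X. A y + s * B y < 0" using Qu by (simp add: A_def B_def)
  define Y where "Y = \<Union>U"
  have fY: "finite Y" using fin finX by (auto simp: Y_def)
  define D where "D = 1 + (\<Sum>y\<in>Y. \<bar>A y\<bar> + \<bar>B y\<bar>)"
  have D1: "D \<ge> 1" unfolding D_def by (auto intro!: sum_nonneg)
  have Dle: "\<bar>A y\<bar> \<le> D \<and> \<bar>B y\<bar> \<le> D" if "X \<in> U" "y \<in> X" for X y
  proof -
    have "\<bar>A y\<bar> + \<bar>B y\<bar> \<le> (\<Sum>y\<in>Y. \<bar>A y\<bar> + \<bar>B y\<bar>)"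
      using that fY by (intro member_le_sum) (auto simp: Y_def)
    then show ?thesis unfolding D_def by auto
  qed
  obtain X0 s0 \<delta>0 where X0: "X0 \<in> U" "\<forall>y\<in>X0. B y \<ge> 0" "\<delta>0 > 0"
      "\<forall>s\<le>s0. \<forall>y\<in>X0. A y + s * B y \<le> -\<delta>0"
    using end_rule[OF fin finX Q] by blast
  have Q': "\<forall>s. \<exists>X\<in>U. \<forall>y\<in>X. A y + s * (- B y) < 0"
  proof
    fix s obtain X where "X \<in> U" "\<forall>y\<in>X. A y + (-s) * B y < 0" using Q by blast
    then show "\<exists>X\<in>U. \<forall>y\<in>X. A y + s * (- B y) < 0" by auto
  qed
  obtain Xt s1' \<delta>1 where Xt: "Xt \<in> U" "\<forall>y\<in>Xt. - B y \<ge> 0" "\<delta>1 > 0"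
      "\<forall>s\<le>s1'. \<forall>y\<in>Xt. A y + s * (- B y) \<le> -\<delta>1"
    using end_rule[OF fin finX Q'] by blast
  define s1 where "s1 = - s1'"
  have Xt4: "\<forall>s\<ge>s1. \<forall>y\<in>Xt. A y + s * B y \<le> -\<delta>1"
  proof (intro allI impI ballI)
    fix s y assume "s \<ge> s1" "y \<in> Xt"
    then have "-s \<le> s1'" by (simp add: s1_def)
    then have "A y + (-s) * (- B y) \<le> -\<delta>1" using Xt(4) \<open>y \<in> Xt\<close> by blast
    then show "A y + s * B y \<le> -\<delta>1" by simp
  qed
  define \<sigma> where "\<sigma> = s0 - 1"
  define sh where "sh = max (s1 + 1) (\<sigma> + 2)"
  obtain \<delta>2 where d2: "\<delta>2 > 0" "\<forall>s\<in>{\<sigma>..sh}. \<exists>X\<in>U. \<forall>y\<in>X. A y + s * B y \<le> -\<delta>2"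
    using mid_rule[OF fin finX Q] by blast
  define \<delta> where "\<delta> = min \<delta>0 (min \<delta>1 \<delta>2)"
  have dpos: "\<delta> > 0" using X0(3) Xt(3) d2(1) by (simp add: \<delta>_def)
  define L where "L = D^2 / \<delta> + D + 1"
  have LD: "L \<ge> D + 1" unfolding L_def using dpos by simp
  have Lpos: "L > 0" using LD D1 by simp
  have LDd: "D^2 < 2 * L * \<delta>"
  proof -
    have "L * \<delta> = D^2 + (D + 1) * \<delta>" unfolding L_def using dpos by (simp add: field_simps)
    moreover have "(D + 1) * \<delta> > 0" using D1 dpos by simp
    ultimately show ?thesis by (simp add: mult.assoc) (smt (verit) zero_le_power2)
  qed
  define a2 where "a2 = L * (sh - \<sigma>)"
  have shs: "sh - \<sigma> \<ge> 2" by (simp add: sh_def)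
  have a2L: "a2 \<ge> 2 * L" unfolding a2_def using shs Lpos by (simp add: mult.commute mult_left_mono)
  have a2D: "a2 \<ge> 2 * D" using a2L LD by simp
  define \<psi> where "\<psi> x = A x + \<sigma> * B x + (B x)^2 / (2 * L)" for x
  define \<Gamma> where "\<Gamma> = \<bar>\<sigma>\<bar> * a2 + a2^2 / (2 * L)"
  have Gb: "\<bar>\<sigma> * b + b^2 / (2 * L)\<bar> \<le> \<Gamma>" if "0 \<le> b" "b \<le> a2" for b
  proof -
    have "\<bar>\<sigma> * b\<bar> \<le> \<bar>\<sigma>\<bar> * a2" using that by (simp add: abs_mult mult_left_mono)
    moreover have "b^2 \<le> a2^2" using that by (simp add: power_mono)
    then have "b^2 / (2 * L) \<le> a2^2 / (2 * L)" using Lpos by (simp add: divide_right_mono)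
    moreover have "b^2 / (2 * L) \<ge> 0" using Lpos by simp
    ultimately show ?thesis unfolding \<Gamma>_def by linarith
  qed
  have G0: "\<Gamma> \<ge> 0" using Gb[of 0] a2D D1 by simp
  define k :: nat where "k = nat \<lceil>(D + 2 * \<Gamma> + 2) / lam\<rceil> + 1"
  define a1 where "a1 = real k * lam"
  have a1big: "a1 \<ge> D + 2 * \<Gamma> + 2"
  proof -
    have "real k \<ge> (D + 2 * \<Gamma> + 2) / lam" unfolding k_def by linarith
    then have "real k * lam \<ge> (D + 2 * \<Gamma> + 2) / lam * lam" using lam by (intro mult_right_mono) auto
    then show ?thesis using lam by (simp add: a1_def)
  qed
  have a1pos: "a1 > 0" using a1big D1 G0 by simp
  define z where "z = int k *s p"
  have rz: "rvec z = a1 *\<^sub>R u" by (simp add: z_def rvec_smult rp a1_def)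
  have Az: "A z = a1" by (simp add: A_def rz uu)
  have Bz: "B z = 0" by (simp add: B_def rz inner_rot_self)
  define R where "R = {x. 0 \<le> A x \<and> A x < a1 \<and> 0 \<le> B x \<and> B x \<le> a2}"
  define \<tau>1 where "\<tau>1 = 2 * a1 + \<Gamma>"
  define P where "P = {x. a1 \<le> A x \<and> 0 \<le> B x \<and> B x \<le> a2 \<and> \<psi> x \<le> \<tau>1}"
  have psiG: "\<psi> x = A x + (\<sigma> * B x + (B x)^2 / (2 * L))" for x by (simp add: \<psi>_def)
  have Rne: "R \<noteq> {}"
  proof -
    have "0 \<in> R" unfolding R_def A_def B_def using a1pos a2D D1 by (simp add: rvec_zero)
    then show ?thesis by blast
  qed
  have Rform: "R = {x. \<exists>t r. 0 \<le> t \<and> t < a1 \<and> 0 \<le> r \<and> r \<le> a2 \<and>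
                          rvec x = t *\<^sub>R u + r *\<^sub>R rot u}"
  proof (intro set_eqI iffI)
    fix x assume "x \<in> R"
    moreover have "rvec x = A x *\<^sub>R u + B x *\<^sub>R rot u" unfolding A_def B_def by (rule decomp[OF nu])
    ultimately show "x \<in> {x. \<exists>t r. 0 \<le> t \<and> t < a1 \<and> 0 \<le> r \<and> r \<le> a2 \<and>
                          rvec x = t *\<^sub>R u + r *\<^sub>R rot u}" unfolding R_def by blast
  next
    fix x assume "x \<in> {x. \<exists>t r. 0 \<le> t \<and> t < a1 \<and> 0 \<le> r \<and> r \<le> a2 \<and>
                          rvec x = t *\<^sub>R u + r *\<^sub>R rot u}"
    then obtain t r where tr: "0 \<le> t" "t < a1" "0 \<le> r" "r \<le> a2" "rvec x = t *\<^sub>R u + r *\<^sub>R rot u" by blast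
    have ru: "rot u \<bullet> u = 0" using inner_rot_self[of u] by (simp add: inner_commute)
    have rr: "rot u \<bullet> rot u = 1" using uu by (simp add: inner_rot_rot)
    have "A x = t" "B x = r" unfolding A_def B_def tr(5)
      by (simp_all add: inner_add_left uu ru inner_rot_self rr)
    then show "x \<in> R" using tr unfolding R_def by simp
  qed
  have Pbound: "A x \<le> \<tau>1 + \<Gamma>" if "x \<in> P" for x
  proof -
    have "\<bar>\<sigma> * B x + (B x)^2 / (2 * L)\<bar> \<le> \<Gamma>" using that Gb unfolding P_def by auto
    then show ?thesis using that unfolding P_def psiG by auto
  qed
  have finP: "finite P"
  proof -
    have "P \<subseteq> {x :: int^'d. \<forall>k. \<bar>x$k\<bar> \<le> \<tau>1 + \<Gamma> + a2}"
    proof (intro subsetI CollectI allI)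
      fix x k assume x: "x \<in> P"
      have "rvec x = A x *\<^sub>R u + B x *\<^sub>R rot u" unfolding A_def B_def by (rule decomp[OF nu])
      then have "norm (rvec x) \<le> \<bar>A x\<bar> + \<bar>B x\<bar>"
        using norm_triangle_ineq[of "A x *\<^sub>R u" "B x *\<^sub>R rot u"] nu norm_rot[of u] by simp
      moreover have "\<bar>A x\<bar> \<le> \<tau>1 + \<Gamma>" using Pbound[OF x] x a1pos unfolding P_def by auto
      moreover have "\<bar>B x\<bar> \<le> a2" using x unfolding P_def by auto
      moreover have "\<bar>rvec x $ k\<bar> \<le> norm (rvec x)" by (rule component_le_norm_cart)
      ultimately show "real_of_int \<bar>x$k\<bar> \<le> \<tau>1 + \<Gamma> + a2" by (simp add: rvec_nth)
    qed
    then show ?thesis using finite_box finite_subset by blast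
  qed
  have sub1: "(\<lambda>x. z + x) ` R \<subseteq> P"
  proof
    fix y assume "y \<in> (\<lambda>x. z + x) ` R"
    then obtain x where x: "x \<in> R" "y = z + x" by blast
    have "\<bar>\<sigma> * B x + (B x)^2 / (2 * L)\<bar> \<le> \<Gamma>" using x Gb unfolding R_def by auto
    then show "y \<in> P" using x unfolding P_def R_def psiG \<tau>1_def by (simp add: Aadd Badd Az Bz abs_le_iff)
  qed
  have sub2: "P \<subseteq> ((\<lambda>x. z + x) ` R) \<union> ((\<lambda>x. z + z + x) ` R)"
  proof
    fix x assume x: "x \<in> P"
    have Ax: "A x < 3 * a1" using Pbound[OF x] a1big D1 unfolding \<tau>1_def by linarith
    show "x \<in> ((\<lambda>x. z + x) ` R) \<union> ((\<lambda>x. z + z + x) ` R)"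
    proof (cases "A x < 2 * a1")
      case True
      have "x - z \<in> R" using x True unfolding R_def P_def by (simp add: Adiff Bdiff Az Bz)
      moreover have "x = z + (x - z)" by simp
      ultimately show ?thesis by blast
    next
      case False
      have e1: "A (x - z - z) = A x - a1 - a1" by (simp only: Adiff Az)
      have e2: "B (x - z - z) = B x" by (simp only: Bdiff Bz diff_zero)
      have "x - z - z \<in> R" unfolding R_def mem_Collect_eq e1 e2 using x False Ax unfolding P_def by auto
      moreover have "x = z + z + (x - z - z)" by simp
      ultimately show ?thesis by blast
    qed
  qed
  have core: "\<forall>x\<in>P. \<exists>X\<in>U. \<forall>y\<in>X. x + y \<in> R \<or> (x + y \<in> P \<and> \<psi> (x + y) < \<psi> x)"
  proof
    fix x assume x: "x \<in> P"
    define b where "b = B x"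
    define ss where "ss = \<sigma> + b / L"
    have b0: "0 \<le> b" "b \<le> a2" using x unfolding P_def b_def by auto
    have "\<exists>X\<in>U. \<forall>y\<in>X. A y + ss * B y \<le> -\<delta> \<and> 0 \<le> b + B y \<and> b + B y \<le> a2"
    proof (cases "b < D")
      case True
      have "b / L \<le> 1" using True LD Lpos b0 by (simp add: divide_le_eq)
      then have "ss \<le> s0" unfolding ss_def \<sigma>_def by simp
      then show ?thesis using X0 Dle[OF X0(1)] True a2D b0 unfolding \<delta>_def
        by (intro bexI[OF _ X0(1)] ballI conjI) force+
    next
      case nb: False
      show ?thesis
      proof (cases "b > a2 - D")
        case True
        have "(a2 - D) / L \<le> b / L" using True Lpos by (simp add: divide_right_mono)
        moreover have "(a2 - D) / L = (sh - \<sigma>) - D / L" unfolding a2_def using Lpos by (simp add: field_simps)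
        moreover have "D / L \<le> 1" using LD Lpos by simp
        ultimately have "ss \<ge> s1" unfolding ss_def sh_def by simp
        then show ?thesis using Xt Xt4 Dle[OF Xt(1)] True a2D b0 unfolding \<delta>_def
          by (intro bexI[OF _ Xt(1)] ballI conjI) force+
      next
        case False
        have "b / L \<le> a2 / L" using b0 Lpos by (simp add: divide_right_mono)
        then have "ss \<in> {\<sigma>..sh}" unfolding ss_def a2_def using Lpos b0 by auto
        then obtain X where X: "X \<in> U" "\<forall>y\<in>X. A y + ss * B y \<le> -\<delta>2" using d2 by blast
        show ?thesis using X Dle[OF X(1)] False nb unfolding \<delta>_def
          by (intro bexI[OF _ X(1)] ballI conjI) force+
      qed
    qed
    then obtain X where X: "X \<in> U" "\<forall>y\<in>X. A y + ss * B y \<le> -\<delta> \<and> 0 \<le> b + B y \<and> b + B y \<le> a2"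
      by blast
    have "\<forall>y\<in>X. x + y \<in> R \<or> (x + y \<in> P \<and> \<psi> (x + y) < \<psi> x)"
    proof
      fix y assume y: "y \<in> X"
      have id: "\<psi> (x + y) - \<psi> x = A y + ss * B y + (B y)^2 / (2 * L)"
        unfolding \<psi>_def Aadd Badd ss_def b_def using Lpos by (simp add: field_simps power2_eq_square)
      have "\<bar>B y\<bar>^2 \<le> D^2" using Dle[OF X(1) y] by (intro power_mono) auto
      then have "(B y)^2 \<le> D^2" by simp
      then have "(B y)^2 < \<delta> * (2 * L)" using LDd by (simp add: mult.commute mult.left_commute)
      then have "(B y)^2 / (2 * L) < \<delta>" using Lpos by (simp add: divide_less_eq)
      moreover have "A y + ss * B y \<le> -\<delta>" using X(2) y by blast
      ultimately have dec: "\<psi> (x + y) < \<psi> x" using id by linarith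
      show "x + y \<in> R \<or> (x + y \<in> P \<and> \<psi> (x + y) < \<psi> x)"
      proof (cases "A (x + y) \<ge> a1")
        case True
        then have "x + y \<in> P" using X(2) y dec x unfolding P_def b_def by (simp add: Badd)
        then show ?thesis using dec by blast
      next
        case False
        have "A x \<ge> a1" using x unfolding P_def by simp
        moreover have "\<bar>A y\<bar> \<le> D" using Dle[OF X(1) y] by simp
        ultimately have "A (x + y) \<ge> 0" using a1big G0 unfolding Aadd by linarith
        then have "x + y \<in> R" using False X(2) y unfolding R_def b_def by (simp add: Badd)
        then show ?thesis by blast
      qed
    qed
    then show "\<exists>X\<in>U. \<forall>y\<in>X. x + y \<in> R \<or> (x + y \<in> P \<and> \<psi> (x + y) < \<psi> x)" using X(1) by blast
  qed
  have w1: "norm (rot u) = 1" using nu norm_rot by simp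
  have a2nn: "a2 \<ge> 0" using a2D D1 by simp
  have Rf: "\<exists>(a2::real) (w::real^'d). a2 \<ge> 0 \<and> norm w = 1 \<and> inner u w = 0 \<and>
              R = {x. \<exists>t r. 0 \<le> t \<and> t < a1 \<and> 0 \<le> r \<and> r \<le> a2 \<and>
                          rvec x = t *\<^sub>R u + r *\<^sub>R w}"
    by (rule exI[of _ a2], rule exI[of _ "rot u"]) (intro conjI a2nn w1 inner_rot_self Rform)
  show ?thesis
    by (rule exI[of _ R], rule exI[of _ a1], rule exI[of _ z], rule exI[of _ P], rule exI[of _ \<psi>])
      (intro conjI a1pos rz Rne Rf finP sub1 sub2 core)
qed

end



locale one =
  fixes i :: "'d::finite"
  assumes univ1: "(UNIV::'d set) = {i}"
begin

lemma inner1: "(x::real^'d) \<bullet> y = x$i * y$i"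
  by (simp add: inner_vec_def univ1)

lemma construct1:
  fixes U :: "(int^'d) set set" and v :: "real^'d"
  assumes nv: "norm v = 1" and X1: "X1 \<in> U" "finite X1" "\<forall>y\<in>X1. rvec y \<bullet> v < 0"
  shows "\<exists>R a1 z P (\<psi>::int^'d \<Rightarrow> real). a1 > 0 \<and> rvec z = a1 *\<^sub>R v \<and> R \<noteq> {} \<and>
     R = {x. \<exists>t. 0 \<le> t \<and> t < a1 \<and> rvec x = t *\<^sub>R v} \<and>
     finite P \<and> (\<lambda>x. z + x) ` R \<subseteq> P \<and> P \<subseteq> ((\<lambda>x. z + x) ` R) \<union> ((\<lambda>x. z + z + x) ` R) \<and>
     (\<forall>x\<in>P. \<exists>X\<in>U. \<forall>y\<in>X. x + y \<in> R \<or> (x + y \<in> P \<and> \<psi> (x + y) < \<psi> x))"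
proof -
  have vv: "v$i * v$i = 1" using nv norm_eq_1[of v] by (simp add: inner1)
  then have vpm: "v$i = 1 \<or> v$i = -1"
    by (metis mult_cancel_left1 mult_minus_left square_eq_1_iff power2_eq_square)
  have veq: "(x::real^'d) = y \<longleftrightarrow> x$i = y$i" for x y
    by (metis (full_types) UNIV_I singletonD univ1 vec_eq_iff)
  have decomp1: "w = (w \<bullet> v) *\<^sub>R v" for w :: "real^'d"
    unfolding veq inner1 using vv by (simp add: mult.assoc)
  define A where "A x = rvec x \<bullet> v" for x :: "int^'d"
  have Aadd: "A (x + y) = A x + A y" for x y by (simp add: A_def rvec_add inner_add_left)
  have Adiff: "A (x - y) = A x - A y" for x y by (simp add: A_def rvec_diff inner_diff_left)
  define p :: "int^'d" where "p = (\<chi> k. round (v$k))"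
  have rm1: "round (-1::real) = -1" by (metis of_int_minus of_int_1 round_of_int)
  have rp: "rvec p = v" unfolding veq using vpm by (auto simp: p_def rvec_def rm1)
  define D where "D = 1 + (\<Sum>y\<in>X1. \<bar>A y\<bar>)"
  have D1: "D \<ge> 1" unfolding D_def by (auto intro!: sum_nonneg)
  have Dle: "\<bar>A y\<bar> \<le> D" if "y \<in> X1" for y
  proof -
    have "\<bar>A y\<bar> \<le> (\<Sum>y\<in>X1. \<bar>A y\<bar>)" using that X1(2) by (intro member_le_sum) auto
    then show ?thesis unfolding D_def by auto
  qed
  define k :: nat where "k = nat \<lceil>D\<rceil> + 1"
  define a1 where "a1 = real k"
  have a1D: "a1 \<ge> D" unfolding a1_def k_def by linarith
  have a1pos: "a1 > 0" using a1D D1 by simp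
  define z where "z = int k *s p"
  have rz: "rvec z = a1 *\<^sub>R v" by (simp add: z_def rvec_smult rp a1_def)
  have Az: "A z = a1" using nv by (simp add: A_def rz norm_eq_1)
  define R where "R = {x. 0 \<le> A x \<and> A x < a1}"
  define P where "P = {x. a1 \<le> A x \<and> A x < 2 * a1}"
  have Rne: "R \<noteq> {}"
  proof -
    have "0 \<in> R" unfolding R_def A_def using a1pos by (simp add: rvec_zero)
    then show ?thesis by blast
  qed
  have Rform: "R = {x. \<exists>t. 0 \<le> t \<and> t < a1 \<and> rvec x = t *\<^sub>R v}"
  proof (intro set_eqI iffI)
    fix x assume "x \<in> R"
    then show "x \<in> {x. \<exists>t. 0 \<le> t \<and> t < a1 \<and> rvec x = t *\<^sub>R v}"
      unfolding R_def A_def using decomp1[of "rvec x"] by blast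
  next
    fix x assume "x \<in> {x. \<exists>t. 0 \<le> t \<and> t < a1 \<and> rvec x = t *\<^sub>R v}"
    then obtain t where t: "0 \<le> t" "t < a1" "rvec x = t *\<^sub>R v" by blast
    have "A x = t" unfolding A_def t(3) using nv by (simp add: norm_eq_1)
    then show "x \<in> R" using t unfolding R_def by simp
  qed
  have finP: "finite P"
  proof -
    have "P \<subseteq> {x :: int^'d. \<forall>k. \<bar>x$k\<bar> \<le> 2 * a1}"
    proof (intro subsetI CollectI allI)
      fix x k assume x: "x \<in> P"
      have "norm (rvec x) = \<bar>A x\<bar>" unfolding A_def
        by (subst decomp1[of "rvec x"]) (simp add: nv)
      moreover have "\<bar>A x\<bar> \<le> 2 * a1" using x a1pos unfolding P_def by auto
      moreover have "\<bar>rvec x $ k\<bar> \<le> norm (rvec x)" by (rule component_le_norm_cart)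
      ultimately show "real_of_int \<bar>x$k\<bar> \<le> 2 * a1" by (simp add: rvec_nth)
    qed
    then show ?thesis using finite_box finite_subset by blast
  qed
  have sub1: "(\<lambda>x. z + x) ` R \<subseteq> P" unfolding R_def P_def by (auto simp: Aadd Az)
  have sub2: "P \<subseteq> ((\<lambda>x. z + x) ` R) \<union> ((\<lambda>x. z + z + x) ` R)"
  proof
    fix x assume x: "x \<in> P"
    have "x - z \<in> R" using x unfolding R_def P_def by (simp add: Adiff Az)
    moreover have "x = z + (x - z)" by simp
    ultimately show "x \<in> ((\<lambda>x. z + x) ` R) \<union> ((\<lambda>x. z + z + x) ` R)" by blast
  qed
  have core: "\<forall>x\<in>P. \<exists>X\<in>U. \<forall>y\<in>X. x + y \<in> R \<or> (x + y \<in> P \<and> A (x + y) < A x)"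
  proof (intro ballI bexI[OF _ X1(1)])
    fix x y assume x: "x \<in> P" and y: "y \<in> X1"
    have neg: "A y < 0" using X1(3) y by (simp add: A_def)
    show "x + y \<in> R \<or> (x + y \<in> P \<and> A (x + y) < A x)"
      using x neg Dle[OF y] a1D unfolding R_def P_def by (auto simp: Aadd)
  qed
  show ?thesis
    by (rule exI[of _ R], rule exI[of _ a1], rule exI[of _ z], rule exI[of _ P], rule exI[of _ A])
      (intro conjI a1pos rz Rne Rform finP sub1 sub2 core)
qed

end



lemma unst_pos:
  assumes sc: "\<forall>u. stable_dir U u \<longrightarrow> inner u v \<le> 0" and pos: "(\<theta>::real^'d) \<bullet> v > 0"
  shows "\<exists>X\<in>U. \<forall>y\<in>X. rvec y \<bullet> \<theta> < 0"
proof -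
  have t0: "\<theta> \<noteq> 0" using pos by auto
  define \<theta>' where "\<theta>' = (1 / norm \<theta>) *\<^sub>R \<theta>"
  have n1: "norm \<theta>' = 1" using t0 by (simp add: \<theta>'_def)
  have "\<theta>' \<bullet> v > 0" using pos t0 by (simp add: \<theta>'_def)
  then have "\<not> stable_dir U \<theta>'" using sc by force
  then obtain X where X: "X \<in> U" "\<forall>x\<in>X. rvec x \<bullet> \<theta>' < 0" using n1 unfolding stable_dir_def by blast
  have "\<forall>x\<in>X. rvec x \<bullet> \<theta> < 0"
  proof
    fix x assume "x \<in> X"
    then have "(1 / norm \<theta>) * (rvec x \<bullet> \<theta>) < 0" using X by (simp add: \<theta>'_def)
    then show "rvec x \<bullet> \<theta> < 0" using t0 by (simp add: divide_less_0_iff)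
  qed
  then show ?thesis using X(1) by blast
qed

theorem mainTheorem9:
  fixes U :: "(int^'d) set set"
  assumes "CARD('d) \<in> {1, 2}"
    and "update_family U"
    and "supercritical U"
  shows "\<exists>(u::real^'d) (R::(int^'d) set) (a1::real) (z::int^'d) (xs::(int^'d) list).
     norm u = 1 \<and> a1 > 0 \<and> rvec z = a1 *\<^sub>R u \<and> R \<noteq> {} \<and>
     (if CARD('d) = 1
      then R = {x. \<exists>t. 0 \<le> t \<and> t < a1 \<and> rvec x = t *\<^sub>R u}
      else (\<exists>(a2::real) (w::real^'d). a2 \<ge> 0 \<and> norm w = 1 \<and> inner u w = 0 \<and>
              R = {x. \<exists>t r. 0 \<le> t \<and> t < a1 \<and> 0 \<le> r \<and> r \<le> a2 \<and>
                          rvec x = t *\<^sub>R u + r *\<^sub>R w})) \<and>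
     xs \<noteq> [] \<and>
     set xs \<subseteq> ((\<lambda>x. z + x) ` R) \<union> ((\<lambda>x. z + z + x) ` R) \<and>
     (\<forall>P0 P1 \<eta> (s::real) (ss::real list).
        harris_clocks P0 P1 \<longrightarrow> kcm_traj U P0 P1 \<eta> \<longrightarrow>
        length ss = length xs \<longrightarrow> s < hd ss \<longrightarrow> sorted_wrt (<) ss \<longrightarrow>
        (\<forall>i < length xs. ss ! i \<in> P0 (xs ! i)) \<longrightarrow>
        (\<forall>y \<in> R \<union> set xs. \<forall>t \<in> P1 y. \<not> (s < t \<and> t \<le> last ss)) \<longrightarrow>
        (\<forall>y \<in> R. \<eta> s y = 0) \<longrightarrow>
        (\<forall>y \<in> (\<lambda>x. z + x) ` R. \<eta> (last ss) y = 0))"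
proof -
  have fin: "finite U" and finX: "\<forall>X\<in>U. finite X \<and> X \<noteq> {}"
    using assms(2) unfolding update_family_def by auto
  obtain v :: "real^'d" where nv: "norm v = 1" and sc: "\<forall>u. stable_dir U u \<longrightarrow> inner u v \<le> 0"
    using assms(3) unfolding supercritical_def by blast
  show ?thesis
  proof (cases "CARD('d) = 1")
    case True
    then obtain i :: 'd where ui: "(UNIV::'d set) = {i}" using card_1_singletonE by blast
    interpret one i by unfold_locales (rule ui)
    have "v \<bullet> v > 0" using nv by (simp add: norm_eq_1)
    then obtain X1 where X1: "X1 \<in> U" "\<forall>y\<in>X1. rvec y \<bullet> v < 0" using unst_pos[OF sc] by blast
    have fX1: "finite X1" using finX X1 by auto
    obtain R a1 z P and \<psi> :: "int^'d \<Rightarrow> real" where c: "a1 > 0" "rvec z = a1 *\<^sub>R v" "R \<noteq> {}"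
      "R = {x. \<exists>t. 0 \<le> t \<and> t < a1 \<and> rvec x = t *\<^sub>R v}"
      "finite P" "(\<lambda>x. z + x) ` R \<subseteq> P" "P \<subseteq> ((\<lambda>x. z + x) ` R) \<union> ((\<lambda>x. z + z + x) ` R)"
      "\<forall>x\<in>P. \<exists>X\<in>U. \<forall>y\<in>X. x + y \<in> R \<or> (x + y \<in> P \<and> \<psi> (x + y) < \<psi> x)"
      using construct1[OF nv X1(1) fX1 X1(2)] by (elim exE, elim conjE) (rule that; assumption)
    obtain xs where xs: "xs \<noteq> [] \<and>
     set xs \<subseteq> ((\<lambda>x. z + x) ` R) \<union> ((\<lambda>x. z + z + x) ` R) \<and>
     (\<forall>P0 P1 \<eta> (s::real) (ss::real list).
        harris_clocks P0 P1 \<longrightarrow> kcm_traj U P0 P1 \<eta> \<longrightarrow>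
        length ss = length xs \<longrightarrow> s < hd ss \<longrightarrow> sorted_wrt (<) ss \<longrightarrow>
        (\<forall>i < length xs. ss ! i \<in> P0 (xs ! i)) \<longrightarrow>
        (\<forall>y \<in> R \<union> set xs. \<forall>t \<in> P1 y. \<not> (s < t \<and> t \<le> last ss)) \<longrightarrow>
        (\<forall>y \<in> R. \<eta> s y = 0) \<longrightarrow>
        (\<forall>y \<in> (\<lambda>x. z + x) ` R. \<eta> (last ss) y = 0))"
      using assemble[OF c(5) c(6) c(7) c(3) c(8)] by (elim exE) (rule that)
    have iff: "(if CARD('d) = 1
      then R = {x. \<exists>t. 0 \<le> t \<and> t < a1 \<and> rvec x = t *\<^sub>R v}
      else (\<exists>(a2::real) (w::real^'d). a2 \<ge> 0 \<and> norm w = 1 \<and> inner v w = 0 \<and>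
              R = {x. \<exists>t r. 0 \<le> t \<and> t < a1 \<and> 0 \<le> r \<and> r \<le> a2 \<and>
                          rvec x = t *\<^sub>R v + r *\<^sub>R w}))" using True c(4) by simp
    show ?thesis
      by (rule exI[of _ v], rule exI[of _ R], rule exI[of _ a1], rule exI[of _ z], rule exI[of _ xs])
        (intro conjI nv c(1) c(2) c(3) iff xs[THEN conjunct1] xs[THEN conjunct2, THEN conjunct1]
           xs[THEN conjunct2, THEN conjunct2])
  next
    case False
    then have c2: "CARD('d) = 2" using assms(1) by simp
    then obtain i j :: 'd where ij: "(UNIV::'d set) = {i, j}" "i \<noteq> j"
    proof -
      have "\<exists>x y. (UNIV::'d set) = {x, y} \<and> x \<noteq> y" using c2 by (simp add: card_2_iff)
      then show ?thesis using that by blast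
    qed
    interpret two i j by unfold_locales (use ij in auto)
    have Qv: "\<forall>s. \<exists>X\<in>U. \<forall>y\<in>X. rvec y \<bullet> v + s * (rvec y \<bullet> rot v) < 0"
    proof
      fix s
      have "(v + s *\<^sub>R rot v) \<bullet> v > 0" using nv inner_rot_self[of v]
        by (simp add: inner_add_left inner_add_right norm_eq_1 inner_commute[of "rot v" v])
      then obtain X where "X \<in> U" "\<forall>y\<in>X. rvec y \<bullet> (v + s *\<^sub>R rot v) < 0" using unst_pos[OF sc] by blast
      then show "\<exists>X\<in>U. \<forall>y\<in>X. rvec y \<bullet> v + s * (rvec y \<bullet> rot v) < 0"
        by (auto simp: inner_add_right)
    qed
    obtain u p lam where r: "norm u = 1" "lam > 0" "rvec p = lam *\<^sub>R u"
      "\<forall>s. \<exists>X\<in>U. \<forall>y\<in>X. rvec y \<bullet> u + s * (rvec y \<bullet> rot u) < 0"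
      using rational_dir[OF fin finX nv Qv] by blast
    obtain R a1 z P and \<psi> :: "int^'d \<Rightarrow> real" where c: "a1 > 0" "rvec z = a1 *\<^sub>R u" "R \<noteq> {}"
      "\<exists>(a2::real) (w::real^'d). a2 \<ge> 0 \<and> norm w = 1 \<and> inner u w = 0 \<and>
              R = {x. \<exists>t r. 0 \<le> t \<and> t < a1 \<and> 0 \<le> r \<and> r \<le> a2 \<and>
                          rvec x = t *\<^sub>R u + r *\<^sub>R w}"
      "finite P" "(\<lambda>x. z + x) ` R \<subseteq> P" "P \<subseteq> ((\<lambda>x. z + x) ` R) \<union> ((\<lambda>x. z + z + x) ` R)"
      "\<forall>x\<in>P. \<exists>X\<in>U. \<forall>y\<in>X. x + y \<in> R \<or> (x + y \<in> P \<and> \<psi> (x + y) < \<psi> x)"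
      using construct2[OF fin finX r] by (elim exE, elim conjE) (rule that; assumption)
    obtain xs where xs: "xs \<noteq> [] \<and>
     set xs \<subseteq> ((\<lambda>x. z + x) ` R) \<union> ((\<lambda>x. z + z + x) ` R) \<and>
     (\<forall>P0 P1 \<eta> (s::real) (ss::real list).
        harris_clocks P0 P1 \<longrightarrow> kcm_traj U P0 P1 \<eta> \<longrightarrow>
        length ss = length xs \<longrightarrow> s < hd ss \<longrightarrow> sorted_wrt (<) ss \<longrightarrow>
        (\<forall>i < length xs. ss ! i \<in> P0 (xs ! i)) \<longrightarrow>
        (\<forall>y \<in> R \<union> set xs. \<forall>t \<in> P1 y. \<not> (s < t \<and> t \<le> last ss)) \<longrightarrow>
        (\<forall>y \<in> R. \<eta> s y = 0) \<longrightarrow>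
        (\<forall>y \<in> (\<lambda>x. z + x) ` R. \<eta> (last ss) y = 0))"
      using assemble[OF c(5) c(6) c(7) c(3) c(8)] by (elim exE) (rule that)
    have iff: "(if CARD('d) = 1
      then R = {x. \<exists>t. 0 \<le> t \<and> t < a1 \<and> rvec x = t *\<^sub>R u}
      else (\<exists>(a2::real) (w::real^'d). a2 \<ge> 0 \<and> norm w = 1 \<and> inner u w = 0 \<and>
              R = {x. \<exists>t r. 0 \<le> t \<and> t < a1 \<and> 0 \<le> r \<and> r \<le> a2 \<and>
                          rvec x = t *\<^sub>R u + r *\<^sub>R w}))" using False c(4) by simp
    show ?thesis
      by (rule exI[of _ u], rule exI[of _ R], rule exI[of _ a1], rule exI[of _ z], rule exI[of _ xs])
        (intro conjI r(1) c(1) c(2) c(3) iff xs[THEN conjunct1] xs[THEN conjunct2, THEN conjunct1]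
           xs[THEN conjunct2, THEN conjunct2])
  qed
qed



end
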